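(* Let $\mathbb{k}$ be a field of characteristic $0$ containing a primitive $n$-th root of unity $\omega$, let $H=T_{n^2}(\omega)$ be the Taft Hopf algebra, and let $A=A_n(\omega)=\mathbb{k}[z]/(z^n-\omega)$ with $u$ the image of $z$. Let $a_i=(\omega-1)^i\omega^{i(i+1)/2}$ and let $\rho:A\to H\otimes A$ be the algebra homomorphism determined by $$\rho(u)=\sum_{i=0}^{n-1}a_i\,x^ig^{-(i+1)}\otimes u^{i+1}$$ (this is well defined since $\rho(u)^n=\omega\,(1\otimes 1)$). Then $A$ is an $H$-comodule algebra via $\rho$, i.e. $(\mathrm{id}\otimes\rho)\rho=(\Delta\otimes\mathrm{id})\rho$, if and only if for all integers $0\le k,s\le n-1$, $$\sum_{\{0\le i_1,\dots,i_{s+1}\le k\ \mid\ \sum_{j=1}^{s+1}i_j=k\}}\omega^{\sum_{j=2}^{s+1}i_j(j-1)}=\begin{cases}\binom{k+s}{k}_{\omega} & \text{if } k+s<n,\\ 0 & \text{if } k+s\ge n.\end{cases}$$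
   Context: The Taft Hopf algebra is $H=T_{n^2}(\omega)=\mathbb{k}\langle x,g\mid x^n=0,\ g^n=1,\ xg=\omega gx\rangle$ with $\Delta(g)=g\otimes g$, $\Delta(x)=x\otimes 1+g\otimes x$, $\epsilon(g)=1$, $\epsilon(x)=0$, $S(g)=g^{-1}$, $S(x)=-g^{-1}x$. The $q$-binomial coefficient is $\binom{k+s}{k}_q=\frac{(1-q^{s+1})\cdots(1-q^{s+k})}{(1-q)\cdots(1-q^k)}$ (a polynomial in $q$), evaluated at $q=\omega$. *)

theory Defs
  imports Main "HOL-Library.FuncSet" "HOL-Computational_Algebra.Polynomial"
begin

text \<open>An element of an algebra with (finite) basis indexed by a set B of indices is
  represented by its coefficient function 'i => 'k.  A multiplication is given by
  structure constants m p q, the vector representing the product of basis elements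
  p and q.\<close>

definition bvec :: "'i \<Rightarrow> 'i \<Rightarrow> 'k::field" where
  "bvec p = (\<lambda>t. if t = p then 1 else 0)"

definition mulv :: "'i set \<Rightarrow> ('i \<Rightarrow> 'i \<Rightarrow> 'i \<Rightarrow> 'k::field)
    \<Rightarrow> ('i \<Rightarrow> 'k) \<Rightarrow> ('i \<Rightarrow> 'k) \<Rightarrow> ('i \<Rightarrow> 'k)" where
  "mulv B m v w = (\<lambda>t. \<Sum>p\<in>B. \<Sum>q\<in>B. v p * w q * m p q t)"

definition powv :: "'i set \<Rightarrow> ('i \<Rightarrow> 'i \<Rightarrow> 'i \<Rightarrow> 'k::field) \<Rightarrow> ('i \<Rightarrow> 'k)
    \<Rightarrow> ('i \<Rightarrow> 'k) \<Rightarrow> nat \<Rightarrow> ('i \<Rightarrow> 'k)" where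
  "powv B m one v k = (mulv B m v ^^ k) one"

definition tens :: "('i \<Rightarrow> 'k::field) \<Rightarrow> ('j \<Rightarrow> 'k) \<Rightarrow> ('i \<times> 'j \<Rightarrow> 'k)" where
  "tens v w = (\<lambda>(p, q). v p * w q)"

definition tmul :: "('i \<Rightarrow> 'i \<Rightarrow> 'i \<Rightarrow> 'k::field) \<Rightarrow> ('j \<Rightarrow> 'j \<Rightarrow> 'j \<Rightarrow> 'k)
    \<Rightarrow> ('i \<times> 'j) \<Rightarrow> ('i \<times> 'j) \<Rightarrow> ('i \<times> 'j) \<Rightarrow> 'k" where
  "tmul m1 m2 = (\<lambda>(p1, p2) (q1, q2). tens (m1 p1 q1) (m2 p2 q2))"

definition linext :: "'i set \<Rightarrow> ('i \<Rightarrow> 'j \<Rightarrow> 'k::field) \<Rightarrow> ('i \<Rightarrow> 'k) \<Rightarrow> ('j \<Rightarrow> 'k)" where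
  "linext B f v = (\<lambda>t. \<Sum>p\<in>B. v p * f p t)"

text \<open>Basis g^a x^b, 0 <= a,b < n, indexed by (a,b).  Since x g = omega g x we have
  (g^a x^b)(g^c x^d) = omega^(b c) g^(a+c mod n) x^(b+d), which is 0 if b+d >= n.\<close>

definition taft_basis :: "nat \<Rightarrow> (nat \<times> nat) set" where
  "taft_basis n = {..<n} \<times> {..<n}"

definition taft_mult :: "nat \<Rightarrow> 'k::field \<Rightarrow> nat \<times> nat \<Rightarrow> nat \<times> nat \<Rightarrow> nat \<times> nat \<Rightarrow> 'k" where
  "taft_mult n \<omega> = (\<lambda>(a, b) (c, d).
     if b + d < n then (\<lambda>t. \<omega> ^ (b * c) * bvec ((a + c) mod n, b + d) t) else (\<lambda>t. 0))"

definition taft_one :: "nat \<times> nat \<Rightarrow> 'k::field" where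
  "taft_one = bvec (0, 0)"

definition taft_g :: "nat \<Rightarrow> nat \<times> nat \<Rightarrow> 'k::field" where
  "taft_g n = bvec (1 mod n, 0)"

definition taft_x :: "nat \<times> nat \<Rightarrow> 'k::field" where
  "taft_x = bvec (0, 1)"

definition taft_pow :: "nat \<Rightarrow> 'k::field \<Rightarrow> (nat \<times> nat \<Rightarrow> 'k) \<Rightarrow> nat \<Rightarrow> (nat \<times> nat \<Rightarrow> 'k)" where
  "taft_pow n \<omega> = powv (taft_basis n) (taft_mult n \<omega>) taft_one"

definition HH_basis :: "nat \<Rightarrow> ((nat \<times> nat) \<times> (nat \<times> nat)) set" where
  "HH_basis n = taft_basis n \<times> taft_basis n"

definition HH_mult :: "nat \<Rightarrow> 'k::field \<Rightarrow> _" where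
  "HH_mult n \<omega> = tmul (taft_mult n \<omega>) (taft_mult n \<omega>)"

definition HH_pow :: "nat \<Rightarrow> 'k::field \<Rightarrow> _" where
  "HH_pow n \<omega> = powv (HH_basis n) (HH_mult n \<omega>) (tens taft_one taft_one)"

definition taft_Delta :: "nat \<Rightarrow> 'k::field \<Rightarrow> nat \<times> nat \<Rightarrow> (nat \<times> nat) \<times> (nat \<times> nat) \<Rightarrow> 'k" where
  "taft_Delta n \<omega> = (\<lambda>(a, b).
     mulv (HH_basis n) (HH_mult n \<omega>)
       (HH_pow n \<omega> (tens (taft_g n) (taft_g n)) a)
       (HH_pow n \<omega> (\<lambda>t. tens taft_x taft_one t + tens (taft_g n) taft_x t) b))"

definition A_basis :: "nat \<Rightarrow> nat set" where
  "A_basis n = {..<n}"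

definition A_mult :: "nat \<Rightarrow> 'k::field \<Rightarrow> nat \<Rightarrow> nat \<Rightarrow> nat \<Rightarrow> 'k" where
  "A_mult n \<omega> i j = (if i + j < n then bvec (i + j) else (\<lambda>t. \<omega> * bvec (i + j - n) t))"

definition A_one :: "nat \<Rightarrow> 'k::field" where
  "A_one = bvec 0"

definition A_u :: "nat \<Rightarrow> 'k::field" where
  "A_u = bvec 1"

definition A_pow :: "nat \<Rightarrow> 'k::field \<Rightarrow> (nat \<Rightarrow> 'k) \<Rightarrow> nat \<Rightarrow> (nat \<Rightarrow> 'k)" where
  "A_pow n \<omega> = powv (A_basis n) (A_mult n \<omega>) A_one"

definition HA_basis :: "nat \<Rightarrow> ((nat \<times> nat) \<times> nat) set" where
  "HA_basis n = taft_basis n \<times> A_basis n"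

definition HA_mult :: "nat \<Rightarrow> 'k::field \<Rightarrow> _" where
  "HA_mult n \<omega> = tmul (taft_mult n \<omega>) (A_mult n \<omega>)"

definition HA_pow :: "nat \<Rightarrow> 'k::field \<Rightarrow> _" where
  "HA_pow n \<omega> = powv (HA_basis n) (HA_mult n \<omega>) (tens taft_one A_one)"

definition coeff_a :: "'k::field \<Rightarrow> nat \<Rightarrow> 'k" where
  "coeff_a \<omega> i = (\<omega> - 1) ^ i * \<omega> ^ (i * (i + 1) div 2)"

text \<open>rho(u) = sum_{i<n} a_i x^i g^{-(i+1)} \<otimes> u^{i+1}, where g^{-(i+1)} = g^{n-(i+1)}.\<close>

definition rho_u :: "nat \<Rightarrow> 'k::field \<Rightarrow> (nat \<times> nat) \<times> nat \<Rightarrow> 'k" where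
  "rho_u n \<omega> = (\<lambda>t. \<Sum>i<n. coeff_a \<omega> i *
      tens (mulv (taft_basis n) (taft_mult n \<omega>)
               (taft_pow n \<omega> taft_x i) (taft_pow n \<omega> (taft_g n) (n - (i + 1))))
           (A_pow n \<omega> A_u (i + 1)) t)"

definition rho :: "nat \<Rightarrow> 'k::field \<Rightarrow> (nat \<Rightarrow> 'k) \<Rightarrow> (nat \<times> nat) \<times> nat \<Rightarrow> 'k" where
  "rho n \<omega> = linext (A_basis n) (\<lambda>j. HA_pow n \<omega> (rho_u n \<omega>) j)"

definition id_rho :: "nat \<Rightarrow> 'k::field \<Rightarrow> ((nat \<times> nat) \<times> nat \<Rightarrow> 'k)
    \<Rightarrow> (nat \<times> nat) \<times> ((nat \<times> nat) \<times> nat) \<Rightarrow> 'k" where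
  "id_rho n \<omega> = linext (HA_basis n) (\<lambda>(p, j). tens (bvec p) (rho n \<omega> (bvec j)))"

definition Delta_id :: "nat \<Rightarrow> 'k::field \<Rightarrow> ((nat \<times> nat) \<times> nat \<Rightarrow> 'k)
    \<Rightarrow> (nat \<times> nat) \<times> ((nat \<times> nat) \<times> nat) \<Rightarrow> 'k" where
  "Delta_id n \<omega> = linext (HA_basis n)
     (\<lambda>(p, j). \<lambda>(h1, (h2, l)). tens (taft_Delta n \<omega> p) (bvec j) ((h1, h2), l))"

definition is_comodule_algebra :: "nat \<Rightarrow> 'k::field \<Rightarrow> bool" where
  "is_comodule_algebra n \<omega> \<longleftrightarrow>
     (\<forall>v. \<forall>t \<in> taft_basis n \<times> HA_basis n.
        id_rho n \<omega> (rho n \<omega> v) t = Delta_id n \<omega> (rho n \<omega> v) t)"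

definition primitive_root :: "nat \<Rightarrow> 'k::field \<Rightarrow> bool" where
  "primitive_root n \<omega> \<longleftrightarrow> 0 < n \<and> \<omega> ^ n = 1 \<and> (\<forall>m. 0 < m \<and> m < n \<longrightarrow> \<omega> ^ m \<noteq> 1)"

text \<open>Gaussian binomial (k+s choose k)_q as a polynomial in q (exact division).\<close>

definition qbinom_poly :: "nat \<Rightarrow> nat \<Rightarrow> 'k::field poly" where
  "qbinom_poly k s =
     (\<Prod>j\<in>{1..k}. 1 - monom 1 (s + j)) div (\<Prod>j\<in>{1..k}. 1 - monom 1 j)"

definition tuple_sum :: "'k::field \<Rightarrow> nat \<Rightarrow> nat \<Rightarrow> 'k" where
  "tuple_sum \<omega> k s =
     (\<Sum>i\<in>{i \<in> {1..s+1} \<rightarrow>\<^sub>E {0..k}. (\<Sum>j\<in>{1..s+1}. i j) = k}.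
        \<omega> ^ (\<Sum>j\<in>{2..s+1}. i j * (j - 1)))"

end

theory Submission
  imports Defs
begin


definition lin :: "'a set \<Rightarrow> ('a \<Rightarrow> 'k::field) \<Rightarrow> ('a \<Rightarrow> 'i) \<Rightarrow> ('i \<Rightarrow> 'k)" where
  "lin I \<alpha> p = (\<lambda>t. \<Sum>i\<in>I. \<alpha> i * bvec (p i) t)"

lemma bvec_apply: "bvec p t = (if t = p then 1 else 0)"
  by (simp add: bvec_def)

lemma lin_apply:
  assumes "finite I"
  shows "lin I \<alpha> p t = (\<Sum>i\<in>{i\<in>I. p i = t}. \<alpha> i)"
proof -
  have "lin I \<alpha> p t = (\<Sum>i\<in>I. if p i = t then \<alpha> i else 0)"
    unfolding lin_def bvec_def by (rule sum.cong) auto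
  also have "\<dots> = (\<Sum>i\<in>{i\<in>I. p i = t}. \<alpha> i)"
    using assms by (simp add: sum.inter_filter)
  finally show ?thesis .
qed

lemma sum_lin_times:
  assumes "finite B" "finite I" "p ` I \<subseteq> B"
  shows "(\<Sum>x\<in>B. lin I \<alpha> p x * f x) = (\<Sum>i\<in>I. \<alpha> i * f (p i))"
proof -
  have "(\<Sum>x\<in>B. lin I \<alpha> p x * f x) = (\<Sum>x\<in>B. \<Sum>i\<in>I. \<alpha> i * (bvec (p i) x * f x))"
    unfolding lin_def by (simp add: sum_distrib_right mult.assoc)
  also have "\<dots> = (\<Sum>i\<in>I. \<Sum>x\<in>B. \<alpha> i * (bvec (p i) x * f x))"
    by (rule sum.swap)
  also have "\<dots> = (\<Sum>i\<in>I. \<alpha> i * f (p i))"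
  proof (rule sum.cong[OF refl])
    fix i assume "i \<in> I"
    hence pi: "p i \<in> B" using assms by auto
    have "(\<Sum>x\<in>B. \<alpha> i * (bvec (p i) x * f x)) = (\<Sum>x\<in>B. if x = p i then \<alpha> i * f (p i) else 0)"
      by (rule sum.cong) (auto simp: bvec_def)
    also have "\<dots> = \<alpha> i * f (p i)" using pi assms(1) by simp
    finally show "(\<Sum>x\<in>B. \<alpha> i * (bvec (p i) x * f x)) = \<alpha> i * f (p i)" .
  qed
  finally show ?thesis .
qed

lemma mulv_lin:
  assumes "finite B" "finite I" "finite J" "p ` I \<subseteq> B" "q ` J \<subseteq> B"
  shows "mulv B m (lin I \<alpha> p) (lin J \<beta> q) =
         (\<lambda>t. \<Sum>i\<in>I. \<Sum>j\<in>J. \<alpha> i * \<beta> j * m (p i) (q j) t)"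
proof
  fix t
  have "mulv B m (lin I \<alpha> p) (lin J \<beta> q) t =
        (\<Sum>x\<in>B. lin I \<alpha> p x * (\<Sum>y\<in>B. lin J \<beta> q y * m x y t))"
    unfolding mulv_def by (simp add: sum_distrib_left mult.assoc)
  also have "\<dots> = (\<Sum>i\<in>I. \<alpha> i * (\<Sum>y\<in>B. lin J \<beta> q y * m (p i) y t))"
    using assms by (rule_tac sum_lin_times) auto
  also have "\<dots> = (\<Sum>i\<in>I. \<alpha> i * (\<Sum>j\<in>J. \<beta> j * m (p i) (q j) t))"
    using assms by (subst sum_lin_times) auto
  also have "\<dots> = (\<Sum>i\<in>I. \<Sum>j\<in>J. \<alpha> i * \<beta> j * m (p i) (q j) t)"
    by (simp add: sum_distrib_left mult.assoc)
  finally show "mulv B m (lin I \<alpha> p) (lin J \<beta> q) t = (\<Sum>i\<in>I. \<Sum>j\<in>J. \<alpha> i * \<beta> j * m (p i) (q j) t)" .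
qed

lemma linext_lin:
  assumes "finite B" "finite I" "p ` I \<subseteq> B"
  shows "linext B f (lin I \<alpha> p) = (\<lambda>t. \<Sum>i\<in>I. \<alpha> i * f (p i) t)"
  unfolding linext_def using assms by (intro ext sum_lin_times) auto

lemma tens_bvec: "tens (bvec p) (bvec q) = bvec (p, q)"
  by (auto simp: tens_def bvec_def)

lemma tens_lin_apply:
  assumes "finite I" "finite J"
  shows "tens (lin I \<alpha> p) (lin J \<beta> q) (t1, t2) = lin (I \<times> J) (\<lambda>(i,j). \<alpha> i * \<beta> j) (\<lambda>(i,j). (p i, q j)) (t1, t2)"
proof -
  have "tens (lin I \<alpha> p) (lin J \<beta> q) (t1, t2) = (\<Sum>i\<in>I. \<alpha> i * bvec (p i) t1) * (\<Sum>j\<in>J. \<beta> j * bvec (q j) t2)"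
    by (simp add: tens_def lin_def)
  also have "\<dots> = (\<Sum>i\<in>I. \<Sum>j\<in>J. (\<alpha> i * bvec (p i) t1) * (\<beta> j * bvec (q j) t2))"
    by (rule sum_product)
  also have "\<dots> = (\<Sum>x\<in>I \<times> J. (\<lambda>(i,j). (\<alpha> i * bvec (p i) t1) * (\<beta> j * bvec (q j) t2)) x)"
    by (rule sum.cartesian_product)
  also have "\<dots> = lin (I \<times> J) (\<lambda>(i,j). \<alpha> i * \<beta> j) (\<lambda>(i,j). (p i, q j)) (t1, t2)"
    unfolding lin_def by (rule sum.cong) (auto simp: bvec_def split: if_splits)
  finally show ?thesis .
qed

lemma tens_lin:
  assumes "finite I" "finite J"
  shows "tens (lin I \<alpha> p) (lin J \<beta> q) = lin (I \<times> J) (\<lambda>(i,j). \<alpha> i * \<beta> j) (\<lambda>(i,j). (p i, q j))"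
proof (rule ext)
  fix x show "tens (lin I \<alpha> p) (lin J \<beta> q) x = lin (I \<times> J) (\<lambda>(i,j). \<alpha> i * \<beta> j) (\<lambda>(i,j). (p i, q j)) x"
    by (cases x) (simp only: tens_lin_apply[OF assms])
qed

lemma lin_filter:
  "(\<lambda>t. \<Sum>i\<in>I. \<Sum>j\<in>J. if P i j then \<gamma> i j * bvec (r i j) t else 0) =
   lin {(i,j)\<in>I \<times> J. P i j} (\<lambda>(i,j). \<gamma> i j) (\<lambda>(i,j). r i j)"
  if "finite I" "finite J"
proof
  fix t
  have "(\<Sum>i\<in>I. \<Sum>j\<in>J. if P i j then \<gamma> i j * bvec (r i j) t else 0)
      = (\<Sum>x\<in>I \<times> J. (\<lambda>(i,j). if P i j then \<gamma> i j * bvec (r i j) t else 0) x)"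
    by (rule sum.cartesian_product)
  also have "\<dots> = (\<Sum>x\<in>I \<times> J. if (\<lambda>(i,j). P i j) x then (\<lambda>(i,j). \<gamma> i j * bvec (r i j) t) x else 0)"
    by (rule sum.cong) auto
  also have "\<dots> = (\<Sum>x\<in>{x\<in>I \<times> J. (\<lambda>(i,j). P i j) x}. (\<lambda>(i,j). \<gamma> i j * bvec (r i j) t) x)"
    using that by (simp add: sum.inter_filter)
  also have "{x\<in>I \<times> J. (\<lambda>(i,j). P i j) x} = {(i,j)\<in>I \<times> J. P i j}" by auto
  finally show "(\<Sum>i\<in>I. \<Sum>j\<in>J. if P i j then \<gamma> i j * bvec (r i j) t else 0) =
      lin {(i,j)\<in>I \<times> J. P i j} (\<lambda>(i,j). \<gamma> i j) (\<lambda>(i,j). r i j) t"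
    unfolding lin_def by (simp add: case_prod_beta)
qed

lemma lin_push:
  assumes "finite I" "finite J" "s ` I \<subseteq> J"
  shows "lin I \<alpha> (\<lambda>i. q (s i)) = lin J (\<lambda>j. \<Sum>i\<in>{i\<in>I. s i = j}. \<alpha> i) q"
proof
  fix t
  have "lin J (\<lambda>j. \<Sum>i\<in>{i\<in>I. s i = j}. \<alpha> i) q t
      = (\<Sum>j\<in>{j\<in>J. q j = t}. \<Sum>i\<in>{i\<in>I. s i = j}. \<alpha> i)"
    using assms by (simp add: lin_apply)
  also have "\<dots> = (\<Sum>j\<in>{j\<in>J. q j = t}. \<Sum>i\<in>{i\<in>{i\<in>I. q (s i) = t}. s i = j}. \<alpha> i)"
    by (rule sum.cong[OF refl]) (rule sum.cong, auto)
  also have "\<dots> = (\<Sum>i\<in>{i\<in>I. q (s i) = t}. \<alpha> i)"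
    using assms by (intro sum.group) auto
  finally show "lin I \<alpha> (\<lambda>i. q (s i)) t = lin J (\<lambda>j. \<Sum>i\<in>{i\<in>I. s i = j}. \<alpha> i) q t"
    using assms by (simp add: lin_apply)
qed

lemma lin_reindex:
  assumes "inj_on h J"
  shows "lin (h ` J) \<alpha> p = lin J (\<lambda>j. \<alpha> (h j)) (\<lambda>j. p (h j))"
  unfolding lin_def using assms by (simp add: sum.reindex)

lemma lin_mono_neutral:
  assumes "finite I'" "I \<subseteq> I'" "\<And>i. i \<in> I' - I \<Longrightarrow> \<alpha> i = 0"
  shows "lin I \<alpha> p = lin I' \<alpha> p"
  unfolding lin_def using assms by (intro ext sum.mono_neutral_left) auto

lemma lin_cong:
  assumes "I = I'" "\<And>i. i \<in> I' \<Longrightarrow> \<alpha> i = \<alpha>' i" "\<And>i. i \<in> I' \<Longrightarrow> p i = p' i"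
  shows "lin I \<alpha> p = lin I' \<alpha>' p'"
  unfolding lin_def using assms by (intro ext sum.cong) auto

lemma bvec_lin: "bvec p = lin {()} (\<lambda>_. 1) (\<lambda>_. p)"
  by (simp add: lin_def)

lemma lin_sum:
  assumes "finite A" "finite I"
  shows "(\<lambda>t. \<Sum>j\<in>A. v j * lin I (\<alpha> j) (p j) t) = lin (A \<times> I) (\<lambda>(j,i). v j * \<alpha> j i) (\<lambda>(j,i). p j i)"
  unfolding lin_def using assms
  by (intro ext) (simp add: sum.cartesian_product sum_distrib_left mult.assoc split_def)




locale taft_setting =
  fixes n :: nat and \<omega> :: "'k::field"
  assumes n2: "2 \<le> n" and prim: "primitive_root n \<omega>"
begin

lemma n_pos: "0 < n" using n2 by simp
lemma w_n: "\<omega> ^ n = 1" using prim by (simp add: primitive_root_def)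
lemma w_ne0: "\<omega> \<noteq> 0" using w_n n_pos by (metis power_0_left less_numeral_extra(3) zero_neq_one)
lemma w_neq1: "0 < m \<Longrightarrow> m < n \<Longrightarrow> \<omega> ^ m \<noteq> 1" using prim by (simp add: primitive_root_def)

lemma w_pow_mod: "\<omega> ^ m = \<omega> ^ (m mod n)"
proof -
  have "\<omega> ^ m = \<omega> ^ (n * (m div n)) * \<omega> ^ (m mod n)" by (simp add: power_add[symmetric])
  also have "\<dots> = \<omega> ^ (m mod n)" by (simp add: power_mult w_n)
  finally show ?thesis .
qed

lemma w_cong: "int a mod int n = int b mod int n \<Longrightarrow> \<omega> ^ a = \<omega> ^ b"
  by (metis w_pow_mod zmod_int of_nat_eq_iff)

lemma w_dvd: "int n dvd (int a - int b) \<Longrightarrow> \<omega> ^ a = \<omega> ^ b"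
  by (intro w_cong) (simp add: mod_eq_dvd_iff)

lemma fin_tb: "finite (taft_basis n)" by (simp add: taft_basis_def)
lemma fin_ab: "finite (A_basis n)" by (simp add: A_basis_def)
lemma fin_hab: "finite (HA_basis n)" by (simp add: HA_basis_def taft_basis_def A_basis_def)
lemma fin_hhb: "finite (HH_basis n)" by (simp add: HH_basis_def taft_basis_def)

lemma mulv_bvec:
  assumes "finite B" "p \<in> B" "q \<in> B"
  shows "mulv B m (bvec p) (bvec q) = m p q"
  using assms by (subst (1 2) bvec_lin, subst mulv_lin) auto

lemma mulv_zero: "mulv B m v (\<lambda>t. 0) = (\<lambda>t. 0)"
  by (simp add: mulv_def)

lemma taft_pow_g: "taft_pow n \<omega> (taft_g n) a = bvec (a mod n, 0)"
proof (induction a)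
  case 0 thus ?case by (simp add: taft_pow_def powv_def taft_one_def)
next
  case (Suc a)
  have "taft_pow n \<omega> (taft_g n) (Suc a) = mulv (taft_basis n) (taft_mult n \<omega>) (bvec (1, 0)) (bvec (a mod n, 0))"
    using Suc n2 by (simp add: taft_pow_def powv_def taft_g_def)
  also have "\<dots> = taft_mult n \<omega> (1, 0) (a mod n, 0)"
    using n2 by (intro mulv_bvec) (auto simp: fin_tb taft_basis_def)
  also have "\<dots> = bvec (Suc a mod n, 0)"
    using n2 by (simp add: taft_mult_def mod_Suc_eq)
  finally show ?case .
qed

lemma taft_pow_x: "i < n \<Longrightarrow> taft_pow n \<omega> taft_x i = bvec (0, i)"
proof (induction i)
  case 0 thus ?case by (simp add: taft_pow_def powv_def taft_one_def)
next
  case (Suc i)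
  have "taft_pow n \<omega> taft_x (Suc i) = mulv (taft_basis n) (taft_mult n \<omega>) (bvec (0, 1)) (bvec (0, i))"
    using Suc by (simp add: taft_pow_def powv_def taft_x_def)
  also have "\<dots> = taft_mult n \<omega> (0, 1) (0, i)"
    using Suc n2 by (intro mulv_bvec) (auto simp: fin_tb taft_basis_def)
  also have "\<dots> = bvec (0, Suc i)"
    using Suc n2 by (simp add: taft_mult_def)
  finally show ?case .
qed

lemma A_pow_u: "A_pow n \<omega> A_u k = (\<lambda>t. \<omega> ^ (k div n) * bvec (k mod n) t)"
proof (induction k)
  case 0 thus ?case by (simp add: A_pow_def powv_def A_one_def)
next
  case (Suc k)
  have "A_pow n \<omega> A_u (Suc k) = mulv (A_basis n) (A_mult n \<omega>) (lin {()} (\<lambda>_. 1) (\<lambda>_. 1)) (lin {()} (\<lambda>_. \<omega> ^ (k div n)) (\<lambda>_. k mod n))"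
    using Suc by (simp add: A_pow_def powv_def A_u_def lin_def)
  also have "\<dots> = (\<lambda>t. \<omega> ^ (k div n) * A_mult n \<omega> 1 (k mod n) t)"
    using n2 by (subst mulv_lin) (auto simp: fin_ab A_basis_def)
  also have "\<dots> = (\<lambda>t. \<omega> ^ (Suc k div n) * bvec (Suc k mod n) t)"
  proof -
    have le: "Suc (k mod n) \<le> n" using mod_less_divisor[OF n_pos, of k] by linarith
    show ?thesis
    proof (cases "Suc (k mod n) = n")
      case True thus ?thesis by (auto simp: A_mult_def mod_Suc div_Suc intro!: ext)
    next
      case False hence "Suc (k mod n) < n" using le by simp
      thus ?thesis using False by (auto simp: A_mult_def mod_Suc div_Suc intro!: ext)
    qed
  qed
  finally show ?case .
qed

lemma HA_mult_eq:
  assumes "l1 < n" "l2 < n"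
  shows "HA_mult n \<omega> ((a1,b1),l1) ((a2,b2),l2) =
    (\<lambda>t. if b1 + b2 < n then \<omega> ^ (b1 * a2) * \<omega> ^ ((l1 + l2) div n) * bvec (((a1 + a2) mod n, b1 + b2), (l1 + l2) mod n) t else 0)"
proof -
  have A: "A_mult n \<omega> l1 l2 = (\<lambda>t. \<omega> ^ ((l1 + l2) div n) * bvec ((l1 + l2) mod n) t)"
  proof (cases "l1 + l2 < n")
    case True thus ?thesis by (simp add: A_mult_def)
  next
    case False
    hence "(l1 + l2) div n = 1" "(l1 + l2) mod n = l1 + l2 - n" using assms
      by (auto simp: div_if mod_if)
    thus ?thesis using False by (simp add: A_mult_def)
  qed
  show ?thesis
    unfolding HA_mult_def tmul_def
    by (auto simp: taft_mult_def tens_def bvec_def A)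
qed

definition ca :: "'k" where "ca = (\<omega> - 1) * \<omega>"

lemma rho_u_lin: "rho_u n \<omega> = lin {..<n}
   (\<lambda>i. coeff_a \<omega> i * \<omega> ^ (i * (n - (i + 1))) * \<omega> ^ ((i + 1) div n))
   (\<lambda>i. ((n - (i + 1), i), (i + 1) mod n))"
proof -
  have "rho_u n \<omega> = (\<lambda>t. \<Sum>i<n. coeff_a \<omega> i * ((\<omega> ^ (i * (n - (i + 1))) * \<omega> ^ ((i + 1) div n)) *
            bvec ((n - (i + 1), i), (i + 1) mod n) t))"
    unfolding rho_u_def
  proof (intro ext sum.cong refl)
    fix t i assume "i \<in> {..<n}"
    hence i: "i < n" by simp
    have m: "mulv (taft_basis n) (taft_mult n \<omega>) (taft_pow n \<omega> taft_x i) (taft_pow n \<omega> (taft_g n) (n - (i + 1)))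
       = taft_mult n \<omega> (0, i) ((n - (i + 1)) mod n, 0)"
      using i by (simp add: taft_pow_x taft_pow_g, intro mulv_bvec) (auto simp: fin_tb taft_basis_def)
    have nn: "(n - (i + 1)) mod n = n - (i + 1)" using i by simp
    show "coeff_a \<omega> i * tens (mulv (taft_basis n) (taft_mult n \<omega>) (taft_pow n \<omega> taft_x i)
              (taft_pow n \<omega> (taft_g n) (n - (i + 1)))) (A_pow n \<omega> A_u (i + 1)) t =
         coeff_a \<omega> i * (\<omega> ^ (i * (n - (i + 1))) * \<omega> ^ ((i + 1) div n) * bvec ((n - (i + 1), i), (i + 1) mod n) t)"
      unfolding m A_pow_u nn using i
      by (cases t) (auto simp: taft_mult_def tens_def bvec_def)
  qed
  thus ?thesis by (simp add: lin_def mult.assoc)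
qed

end



fun gpoly :: "nat \<Rightarrow> nat \<Rightarrow> 'a::comm_ring_1 poly" where
  "gpoly 0 s = 1"
| "gpoly (Suc k) 0 = 1"
| "gpoly (Suc k) (Suc s) = gpoly k (Suc s) + monom 1 (Suc k) * gpoly (Suc k) s"

definition Dpoly :: "nat \<Rightarrow> 'a::comm_ring_1 poly" where
  "Dpoly k = (\<Prod>j\<in>{1..k}. 1 - monom 1 j)"

definition Fpoly :: "nat \<Rightarrow> nat \<Rightarrow> 'a::comm_ring_1 poly" where
  "Fpoly k s = (\<Prod>j\<in>{1..k}. 1 - monom 1 (s + j))"

lemma Fpoly_Suc: "Fpoly (Suc k) s = Fpoly k s * (1 - monom 1 (s + Suc k))"
  by (simp add: Fpoly_def prod.cl_ivl_Suc)

lemma Fpoly_Suc2: "Fpoly (Suc k) s = (1 - monom 1 (Suc s)) * Fpoly k (Suc s)"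
proof (induction k)
  case 0 thus ?case by (simp add: Fpoly_def)
next
  case (Suc k)
  have "Fpoly (Suc (Suc k)) s = Fpoly (Suc k) s * (1 - monom 1 (s + Suc (Suc k)) :: 'a poly)" by (rule Fpoly_Suc)
  also have "\<dots> = ((1 - monom 1 (Suc s)) * Fpoly k (Suc s)) * (1 - monom 1 (Suc s + Suc k))"
    by (subst Suc.IH) simp
  also have "\<dots> = (1 - monom 1 (Suc s)) * (Fpoly k (Suc s) * (1 - monom 1 (Suc s + Suc k)))"
    by (simp add: mult.assoc)
  also have "\<dots> = (1 - monom 1 (Suc s)) * Fpoly (Suc k) (Suc s)" by (simp add: Fpoly_Suc)
  finally show ?case .
qed

lemma Dpoly_Suc: "Dpoly (Suc k) = Dpoly k * (1 - monom 1 (Suc k))"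
  by (simp add: Dpoly_def prod.cl_ivl_Suc)

lemma Fpoly_0: "Fpoly 0 s = 1" by (simp add: Fpoly_def)
lemma Dpoly_0: "Dpoly 0 = 1" by (simp add: Dpoly_def)

lemma gpoly_D: "gpoly k s * Dpoly k = (Fpoly k s :: 'a::comm_ring_1 poly)"
proof (induction k s rule: gpoly.induct)
  case (1 s) thus ?case by (simp add: Dpoly_0 Fpoly_0)
next
  case (2 k) thus ?case by (simp add: Dpoly_def Fpoly_def)
next
  case (3 k s)
  have "gpoly (Suc k) (Suc s) * Dpoly (Suc k)
      = (gpoly k (Suc s) * Dpoly k) * (1 - monom 1 (Suc k)) + monom 1 (Suc k) * (gpoly (Suc k) s * (Dpoly (Suc k) :: 'a poly))"
    by (simp add: Dpoly_Suc algebra_simps)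
  also have "\<dots> = Fpoly k (Suc s) * (1 - monom 1 (Suc k)) + monom 1 (Suc k) * Fpoly (Suc k) s"
    by (subst 3(1), subst 3(2), rule refl)
  also have "\<dots> = Fpoly k (Suc s) * (1 - monom 1 (Suc k) * (monom 1 (Suc s) :: 'a poly))"
    by (simp add: Fpoly_Suc2 algebra_simps)
  also have "monom 1 (Suc k) * monom 1 (Suc s) = (monom 1 (Suc s + Suc k) :: 'a poly)"
    by (simp add: mult_monom add_ac)
  also have "Fpoly k (Suc s) * (1 - monom 1 (Suc s + Suc k)) = (Fpoly (Suc k) (Suc s) :: 'a poly)"
    by (simp add: Fpoly_Suc)
  finally show ?case .
qed

lemma Dpoly_ne0: "Dpoly k \<noteq> (0 :: 'a::idom poly)"
proof -
  have "\<forall>j\<in>{1..k}. (1 - monom 1 j :: 'a poly) \<noteq> 0"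
  proof
    fix j :: nat assume "j \<in> {1..k}"
    hence "j \<noteq> 0" by auto
    hence "poly (1 - monom 1 j :: 'a poly) 0 = 1" by (simp add: poly_monom)
    thus "(1 - monom 1 j :: 'a poly) \<noteq> 0" by auto
  qed
  thus ?thesis unfolding Dpoly_def by (simp add: prod_zero_iff)
qed

lemma qbinom_poly_gpoly: "qbinom_poly k s = (gpoly k s :: 'a::field poly)"
proof -
  have "qbinom_poly k s = Fpoly k s div Dpoly k" by (simp add: qbinom_poly_def Fpoly_def Dpoly_def)
  also have "\<dots> = gpoly k s * Dpoly k div Dpoly k" by (simp add: gpoly_D)
  also have "\<dots> = gpoly k s" by (rule nonzero_mult_div_cancel_right[OF Dpoly_ne0])
  finally show ?thesis .
qed

lemma gpoly_sym: "gpoly k s = (gpoly s k :: 'a::idom poly)"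
proof -
  have F: "Fpoly k s * Dpoly s = (Dpoly (k + s) :: 'a poly)" for k s
  proof (induction k)
    case 0 thus ?case by (simp add: Fpoly_0)
  next
    case (Suc k)
    thus ?case by (simp add: Fpoly_Suc Dpoly_Suc algebra_simps)
  qed
  have "gpoly k s * (Dpoly k * Dpoly s) = gpoly s k * (Dpoly k * Dpoly s :: 'a poly)"
    by (metis F gpoly_D add.commute mult.assoc mult.commute)
  moreover have "Dpoly k * Dpoly s \<noteq> (0 :: 'a poly)" by (simp add: Dpoly_ne0)
  ultimately show ?thesis by simp
qed

primrec hh :: "'a::comm_ring_1 \<Rightarrow> nat \<Rightarrow> nat \<Rightarrow> 'a" where
  "hh q 0 m = (if m = 0 then 1 else 0)"
| "hh q (Suc j) m = (\<Sum>i\<le>m. q ^ i * hh q j i)"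

context taft_setting
begin

definition gb :: "nat \<Rightarrow> nat \<Rightarrow> 'k" where "gb k s = poly (gpoly k s) \<omega>"
definition dd :: "nat \<Rightarrow> 'k" where "dd k = (\<Prod>j\<in>{1..k}. 1 - \<omega> ^ j)"
definition ff :: "nat \<Rightarrow> nat \<Rightarrow> 'k" where "ff k s = (\<Prod>j\<in>{1..k}. 1 - \<omega> ^ (s + j))"

lemma poly_Dpoly: "poly (Dpoly k) \<omega> = dd k"
  by (simp add: Dpoly_def dd_def poly_prod poly_monom)
lemma poly_Fpoly: "poly (Fpoly k s) \<omega> = ff k s"
  by (simp add: Fpoly_def ff_def poly_prod poly_monom)

lemma gb_dd: "gb k s * dd k = ff k s"
  using arg_cong[OF gpoly_D[of k s], of "\<lambda>p. poly p \<omega>"]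
  by (simp add: gb_def poly_Dpoly poly_Fpoly)

lemma ff_dd: "ff k s * dd s = dd (k + s)"
proof (induction k)
  case 0 thus ?case by (simp add: ff_def)
next
  case (Suc k)
  have "ff (Suc k) s * dd s = (ff k s * dd s) * (1 - \<omega> ^ (s + Suc k))"
    by (simp add: ff_def prod.cl_ivl_Suc algebra_simps)
  also have "\<dots> = dd (Suc k + s)" using Suc by (simp add: dd_def prod.cl_ivl_Suc add.commute)
  finally show ?case .
qed

lemma dd_ne0: "k < n \<Longrightarrow> dd k \<noteq> 0"
  unfolding dd_def using w_neq1 by (auto simp: prod_zero_iff)

lemma dd_zero: "n \<le> k \<Longrightarrow> dd k = 0"
  unfolding dd_def using n_pos w_n by (auto simp: prod_zero_iff intro!: bexI[of _ n])

lemma gb_0: "gb 0 s = 1" by (simp add: gb_def)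
lemma gb_0': "gb k 0 = 1" by (cases k) (simp_all add: gb_def)
lemma gb_rec: "gb (Suc k) (Suc s) = gb k (Suc s) + \<omega> ^ Suc k * gb (Suc k) s"
  by (simp add: gb_def poly_monom)

lemma ff_period: "ff k (s + n) = ff k s"
  unfolding ff_def
proof (rule prod.cong[OF refl])
  fix j show "1 - \<omega> ^ (s + n + j) = 1 - \<omega> ^ (s + j)"
    by (simp add: power_add w_n)
qed

lemma gb_period: "k < n \<Longrightarrow> gb k (s + n) = gb k s"
  using gb_dd[of k "s + n"] gb_dd[of k s] ff_period[of k s] dd_ne0[of k] by (metis mult_right_cancel)

lemma hh_gb: "hh \<omega> (Suc j) m = gb m j"
proof (induction j arbitrary: m)
  case 0
  have "hh \<omega> (Suc 0) m = (\<Sum>i\<le>m. if i = 0 then 1 else 0)"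
    by (simp add: if_distrib cong: if_cong)
  also have "\<dots> = 1" by simp
  finally show ?case by (simp add: gb_0')
next
  case (Suc j)
  note IH = Suc.IH
  show ?case
  proof (induction m)
    case 0
    have "hh \<omega> (Suc (Suc j)) 0 = hh \<omega> (Suc j) 0" by simp
    also have "\<dots> = gb 0 j" by (rule IH)
    finally show ?case by (simp add: gb_0)
  next
    case (Suc m)
    have "hh \<omega> (Suc (Suc j)) (Suc m) = hh \<omega> (Suc (Suc j)) m + \<omega> ^ Suc m * hh \<omega> (Suc j) (Suc m)"
      by simp
    also have "\<dots> = gb m (Suc j) + \<omega> ^ Suc m * gb (Suc m) j" by (simp only: Suc.IH IH)
    also have "\<dots> = gb (Suc m) (Suc j)" by (simp add: gb_rec)
    finally show ?case .
  qed
qed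

end



primrec tri :: "nat \<Rightarrow> nat" where
  "tri 0 = 0" | "tri (Suc b) = tri b + b"

lemma tri_add: "tri (a + b) = tri a + tri b + a * b"
  by (induction b) auto

lemma tri_Suc2: "tri (Suc i) * 2 = Suc i * i"
  by (induction i) (auto simp: algebra_simps)

lemma tri_coeff: "i * (i + 1) div 2 = tri i + i"
proof -
  have "i * (i + 1) = tri (Suc i) * 2" using tri_Suc2[of i] by (simp add: algebra_simps)
  thus ?thesis by simp
qed

context taft_setting
begin

definition ga :: "nat \<Rightarrow> nat \<Rightarrow> nat" where "ga j b = (n - (b + j) mod n) mod n"

lemma ga_int: "\<exists>q. int (ga j b) = int n * q - int (b + j)"
proof -
  define r where "r = (b + j) mod n"
  define d where "d = (b + j) div n"
  have bj: "b + j = n * d + r" by (simp add: r_def d_def)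
  have rn: "r < n" using n_pos by (simp add: r_def)
  show ?thesis
  proof (cases "r = 0")
    case True
    hence "ga j b = 0" by (simp add: ga_def r_def[symmetric])
    thus ?thesis using bj True by (intro exI[of _ "int d"]) simp
  next
    case False
    hence "ga j b = n - r" using rn by (simp add: ga_def r_def[symmetric])
    hence "int (ga j b) = int n - int r" using rn by simp
    also have "\<dots> = int n * (int d + 1) - int (b + j)" using bj by (simp add: algebra_simps)
    finally show ?thesis by blast
  qed
qed

lemma ga_1: "i < n \<Longrightarrow> ga (Suc 0) i = n - (i + 1)"
  by (cases "i + 1 = n") (auto simp: ga_def)

definition ek :: "nat \<Rightarrow> nat \<Rightarrow> nat" where
  "ek j b = tri b + b * ga j b + (b + j) div n"

definition kr :: "nat \<Rightarrow> nat \<Rightarrow> 'k" where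
  "kr j b = ca ^ b * \<omega> ^ ek j b"

definition kap :: "nat \<Rightarrow> nat \<Rightarrow> 'k" where
  "kap j b = hh \<omega> j b * kr j b"

lemma kr_prod:
  assumes "b2 < n"
  shows "kr j b1 * kr ((b1 + j) mod n) b2 = kr j (b1 + b2)"
proof -
  define l where "l = (b1 + j) mod n"
  define D where "D = (b1 + j) div n"
  have lD: "int l = int (b1 + j) - int n * int D" unfolding l_def D_def
    by (metis add_diff_cancel_left' div_mult_mod_eq mult.commute of_nat_add of_nat_mult)
  obtain q1 where q1: "int (ga j b1) = int n * q1 - int (b1 + j)" using ga_int by blast
  obtain q2 where q2: "int (ga l b2) = int n * q2 - int (b2 + l)" using ga_int by blast
  obtain q3 where q3: "int (ga j (b1 + b2)) = int n * q3 - int (b1 + b2 + j)" using ga_int by blast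
  have dv: "(b1 + j) div n + (b2 + l) div n = (b1 + b2 + j) div n"
  proof -
    have "(b1 + j + b2) div n = (b1 + j) div n + b2 div n + ((b1 + j) mod n + b2 mod n) div n"
      by (rule div_add1_eq)
    thus ?thesis using assms by (simp add: l_def add_ac)
  qed
  have "int (ek j b1 + ek l b2) - int (ek j (b1 + b2))
      = int (ga j b1) * int b1 + int (ga l b2) * int b2 - int (ga j (b1 + b2)) * (int b1 + int b2) - int b1 * int b2"
    unfolding ek_def using dv by (simp add: tri_add algebra_simps)
  also have "\<dots> = int n * (q1 * int b1 + q2 * int b2 + int D * int b2 - q3 * (int b1 + int b2))"
    unfolding q1 q2 q3 by (simp add: algebra_simps lD)
  finally have "int n dvd int (ek j b1 + ek l b2) - int (ek j (b1 + b2))" by simp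
  hence "\<omega> ^ (ek j b1 + ek l b2) = \<omega> ^ ek j (b1 + b2)" by (rule w_dvd)
  thus ?thesis unfolding kr_def l_def[symmetric]
    by (simp add: power_add algebra_simps)
qed

lemma kr_step:
  "kr (Suc 0) i * kr j b * \<omega> ^ (i * ga j b) * \<omega> ^ (((i + 1) mod n + (b + j) mod n) div n)
   = \<omega> ^ b * kr (Suc j) (i + b)"
proof -
  obtain q1 where q1: "int (ga (Suc 0) i) = int n * q1 - int (i + Suc 0)" using ga_int by blast
  obtain q2 where q2: "int (ga j b) = int n * q2 - int (b + j)" using ga_int by blast
  obtain q3 where q3: "int (ga (Suc j) (i + b)) = int n * q3 - int (i + b + Suc j)" using ga_int by blast
  have dv: "(i + 1) div n + (b + j) div n + ((i + 1) mod n + (b + j) mod n) div n = (i + b + Suc j) div n"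
    using div_add1_eq[of "i + 1" "b + j" n] by (simp add: add_ac)
  have "int (ek (Suc 0) i + ek j b + i * ga j b + ((i + 1) mod n + (b + j) mod n) div n) - int (b + ek (Suc j) (i + b))
      = int (ga (Suc 0) i) * int i + int (ga j b) * int b + int i * int (ga j b) - int b - int i * int b
        - int (ga (Suc j) (i + b)) * (int i + int b)"
    unfolding ek_def using dv by (simp add: tri_add algebra_simps)
  also have "\<dots> = int n * (q1 * int i + q2 * int b + q2 * int i - q3 * (int i + int b))"
    unfolding q1 q2 q3 by (simp add: algebra_simps)
  finally have "int n dvd int (ek (Suc 0) i + ek j b + i * ga j b + ((i + 1) mod n + (b + j) mod n) div n) - int (b + ek (Suc j) (i + b))"
    by simp
  hence "\<omega> ^ (ek (Suc 0) i + ek j b + i * ga j b + ((i + 1) mod n + (b + j) mod n) div n) = \<omega> ^ (b + ek (Suc j) (i + b))"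
    by (rule w_dvd)
  thus ?thesis unfolding kr_def by (simp add: power_add algebra_simps)
qed

lemma hh_1: "hh \<omega> (Suc 0) m = 1"
  using hh_gb[of 0 m] gb_0' by simp

lemma kap_1: "i < n \<Longrightarrow> coeff_a \<omega> i * \<omega> ^ (i * (n - (i + 1))) * \<omega> ^ ((i + 1) div n) = kap (Suc 0) i"
proof -
  assume i: "i < n"
  have "coeff_a \<omega> i = (\<omega> - 1) ^ i * \<omega> ^ (tri i + i)" unfolding coeff_a_def tri_coeff ..
  moreover have "kap (Suc 0) i = ca ^ i * \<omega> ^ (tri i + i * (n - (i + 1)) + (i + 1) div n)"
    unfolding kap_def kr_def ek_def using i by (simp del: hh.simps add: hh_1 ga_1)
  ultimately show ?thesis unfolding ca_def by (simp add: power_add power_mult_distrib mult_ac)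
qed

lemma kap_rec:
  "kap (Suc j) b' = (\<Sum>b\<le>b'. kap (Suc 0) (b' - b) * kap j b * \<omega> ^ ((b' - b) * ga j b)
       * \<omega> ^ (((b' - b + 1) mod n + (b + j) mod n) div n))"
proof -
  have "(\<Sum>b\<le>b'. kap (Suc 0) (b' - b) * kap j b * \<omega> ^ ((b' - b) * ga j b)
       * \<omega> ^ (((b' - b + 1) mod n + (b + j) mod n) div n))
      = (\<Sum>b\<le>b'. hh \<omega> j b * (kr (Suc 0) (b' - b) * kr j b * \<omega> ^ ((b' - b) * ga j b)
       * \<omega> ^ (((b' - b + 1) mod n + (b + j) mod n) div n)))"
    unfolding kap_def by (simp del: hh.simps add: hh_1 algebra_simps)
  also have "\<dots> = (\<Sum>b\<le>b'. hh \<omega> j b * (\<omega> ^ b * kr (Suc j) b'))"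
  proof (intro sum.cong refl)
    fix b assume "b \<in> {..b'}"
    hence e: "b' - b + b = b'" by simp
    show "hh \<omega> j b * (kr (Suc 0) (b' - b) * kr j b * \<omega> ^ ((b' - b) * ga j b)
       * \<omega> ^ (((b' - b + 1) mod n + (b + j) mod n) div n)) = hh \<omega> j b * (\<omega> ^ b * kr (Suc j) b')"
      by (simp only: kr_step e)
  qed
  also have "\<dots> = kap (Suc j) b'"
    unfolding kap_def by (simp add: sum_distrib_left sum_distrib_right mult_ac)
  finally show ?thesis ..
qed

lemma hh_period:
  assumes "b2 < n" "0 < L" "L < 2 * n"
  shows "hh \<omega> (L mod n) b2 = hh \<omega> L b2"
proof (cases "L < n")
  case True thus ?thesis by simp
next
  case False
  hence Lm: "L mod n = L - n" using assms by (simp add: mod_if)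
  obtain L' where L': "L = Suc L'" using assms by (cases L) auto
  show ?thesis
  proof (cases "L = n")
    case True
    hence "L mod n = 0" by simp
    moreover have "hh \<omega> L b2 = (if b2 = 0 then 1 else 0)"
    proof -
      have "hh \<omega> L b2 = gb b2 (n - 1)" using L' True hh_gb by simp
      also have "\<dots> = (if b2 = 0 then 1 else 0)"
      proof (cases b2)
        case 0 thus ?thesis by (simp add: gb_0)
      next
        case (Suc c)
        have "1 \<in> {1..b2}" using Suc by simp
        moreover have "1 - \<omega> ^ (n - 1 + 1) = 0" using n_pos w_n by simp
        ultimately have "\<exists>a\<in>{1..b2}. 1 - \<omega> ^ (n - 1 + a) = 0" by blast
        hence "ff b2 (n - 1) = 0" unfolding ff_def by (intro prod_zero) auto
        hence "gb b2 (n - 1) * dd b2 = 0" by (simp add: gb_dd)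
        thus ?thesis using dd_ne0[OF assms(1)] Suc by simp
      qed
      finally show ?thesis .
    qed
    ultimately show ?thesis by simp
  next
    case False
    hence "n < L" using \<open>\<not> L < n\<close> by simp
    then obtain M where M: "L - n = Suc M" by (cases "L - n") auto
    have "hh \<omega> (L mod n) b2 = gb b2 M" using Lm M hh_gb by simp
    also have "\<dots> = gb b2 (M + n)" using gb_period[OF assms(1)] by simp
    also have "M + n = L'" using M L' by simp
    also have "gb b2 L' = hh \<omega> L b2" using L' hh_gb by simp
    finally show ?thesis .
  qed
qed

lemma hh_prod:
  assumes "j < n" "b1 < n" "b2 < n"
  shows "hh \<omega> j b1 * hh \<omega> ((b1 + j) mod n) b2 = (if b1 + b2 < n then hh \<omega> j (b1 + b2) * gb b2 b1 else 0)"
proof (cases j)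
  case 0
  thus ?thesis using assms by (cases "b1 = 0") (auto simp: gb_0')
next
  case (Suc j')
  have per: "hh \<omega> ((b1 + j) mod n) b2 = hh \<omega> (b1 + j) b2"
    using assms Suc by (intro hh_period) auto
  have j': "j' < n" using Suc assms by simp
  have nz: "dd b1 * dd b2 * dd j' \<noteq> 0" using dd_ne0 assms j' by simp
  have L: "hh \<omega> j b1 * hh \<omega> (b1 + j) b2 * (dd b1 * dd b2 * dd j') = dd (b1 + b2 + j')"
  proof -
    have "hh \<omega> j b1 * hh \<omega> (b1 + j) b2 * (dd b1 * dd b2 * dd j') = (gb b1 j' * dd b1 * dd j') * (gb b2 (b1 + j') * dd b2)"
      using Suc hh_gb by (simp add: algebra_simps)
    also have "gb b1 j' * dd b1 * dd j' = dd (b1 + j')" by (simp add: gb_dd ff_dd)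
    also have "dd (b1 + j') * (gb b2 (b1 + j') * dd b2) = dd (b1 + b2 + j')"
      by (simp add: gb_dd mult.commute[of "dd (b1 + j')"] ff_dd add_ac)
    finally show ?thesis .
  qed
  show ?thesis
  proof (cases "b1 + b2 < n")
    case True
    have R: "hh \<omega> j (b1 + b2) * gb b2 b1 * (dd b1 * dd b2 * dd j') = dd (b1 + b2 + j')"
    proof -
      have "hh \<omega> j (b1 + b2) * gb b2 b1 * (dd b1 * dd b2 * dd j') = (gb (b1 + b2) j' * (gb b2 b1 * dd b2 * dd b1)) * dd j'"
        using Suc hh_gb by (simp add: algebra_simps)
      also have "gb b2 b1 * dd b2 * dd b1 = dd (b1 + b2)" by (simp add: gb_dd ff_dd add_ac)
      also have "gb (b1 + b2) j' * dd (b1 + b2) * dd j' = dd (b1 + b2 + j')" by (simp add: gb_dd ff_dd)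
      finally show ?thesis .
    qed
    show ?thesis using L R nz True per by (metis mult_right_cancel)
  next
    case False
    have "dd (b1 + b2 + j') = 0" using False by (intro dd_zero) simp
    thus ?thesis using L nz False per by simp
  qed
qed

lemma kap_prod:
  assumes "j < n" "b1 < n" "b2 < n"
  shows "kap j b1 * kap ((b1 + j) mod n) b2 = (if b1 + b2 < n then kap j (b1 + b2) * gb b2 b1 else 0)"
proof -
  have "kap j b1 * kap ((b1 + j) mod n) b2 = (hh \<omega> j b1 * hh \<omega> ((b1 + j) mod n) b2) * (kr j b1 * kr ((b1 + j) mod n) b2)"
    unfolding kap_def by (simp add: algebra_simps)
  also have "\<dots> = (if b1 + b2 < n then hh \<omega> j (b1 + b2) * gb b2 b1 else 0) * kr j (b1 + b2)"
    using assms by (simp add: hh_prod kr_prod)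
  finally show ?thesis unfolding kap_def by (simp add: algebra_simps)
qed

end



context taft_setting
begin

definition pos :: "nat \<Rightarrow> nat \<Rightarrow> (nat \<times> nat) \<times> nat" where
  "pos j b = ((ga j b, b), (b + j) mod n)"

lemma ga_lt: "ga j b < n" using n_pos by (simp add: ga_def)

lemma ga_char:
  assumes "x < n" "int n dvd (int x + int (b + j))"
  shows "ga j b = x"
proof -
  obtain q where q: "int (ga j b) = int n * q - int (b + j)" using ga_int by blast
  obtain r where r: "int x + int (b + j) = int n * r" using assms(2) by (auto elim: dvdE)
  have "int x - int (ga j b) = int n * (r - q)" using q r by (simp add: algebra_simps)
  hence "int n dvd (int x - int (ga j b))" by simp
  moreover have "\<bar>int x - int (ga j b)\<bar> < int n" using assms(1) ga_lt[of j b] by linarith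
  ultimately have "int x - int (ga j b) = 0"
  proof -
    assume d: "int n dvd (int x - int (ga j b))" and l: "\<bar>int x - int (ga j b)\<bar> < int n"
    show ?thesis
    proof (rule ccontr)
      assume "int x - int (ga j b) \<noteq> 0"
      from dvd_imp_le_int[OF this d] l show False by simp
    qed
  qed
  thus ?thesis by simp
qed

lemma ga_step:
  assumes "i < n"
  shows "(n - (i + 1) + ga j b) mod n = ga (Suc j) (i + b)"
proof (rule ga_char[symmetric])
  show "(n - (i + 1) + ga j b) mod n < n" using n_pos by simp
  define X where "X = n - (i + 1) + ga j b"
  obtain q where q: "int (ga j b) = int n * q - int (b + j)" using ga_int by blast
  have e: "int X = int n * int (X div n) + int (X mod n)"
    by (simp only: of_nat_mult[symmetric] of_nat_add[symmetric] mult_div_mod_eq)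
  have "int (X mod n) = int X - int n * int (X div n)" using e by simp
  also have "int X = int n - int (i + 1) + int (ga j b)" using assms by (simp add: X_def of_nat_diff)
  finally have "int (X mod n) + int (i + b + Suc j) = int n * (1 + q - int (X div n))"
    using q by (simp add: algebra_simps)
  thus "int n dvd (int ((n - (i + 1) + ga j b) mod n) + int (i + b + Suc j))"
    unfolding X_def by (rule dvdI)
qed

lemma HA_pow_Suc: "HA_pow n \<omega> v (Suc j) = mulv (HA_basis n) (HA_mult n \<omega>) v (HA_pow n \<omega> v j)"
  by (simp add: HA_pow_def powv_def)

lemma rho_u_lin': "rho_u n \<omega> = lin {..<n} (kap (Suc 0)) (\<lambda>i. ((n - (i + 1), i), (i + 1) mod n))"
  unfolding rho_u_lin by (rule lin_cong, simp, rule kap_1, simp, simp)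

lemma pos_in: "pos j b \<in> HA_basis n" if "b < n"
  using that n_pos ga_lt by (simp add: pos_def HA_basis_def taft_basis_def A_basis_def)

lemma rho_pow: "HA_pow n \<omega> (rho_u n \<omega>) j = lin {..<n} (kap j) (pos j)"
proof (induction j)
  case 0
  have "lin {..<n} (kap 0) (pos 0) = lin {0} (kap 0) (pos 0)"
    using n_pos by (intro lin_mono_neutral[symmetric]) (auto simp: kap_def)
  also have "\<dots> = bvec ((0, 0), 0)"
    by (simp add: lin_def kap_def kr_def ek_def pos_def ga_def)
  finally show ?case by (simp add: HA_pow_def powv_def taft_one_def A_one_def tens_bvec)
next
  case (Suc j)
  let ?c = "\<lambda>i b. kap (Suc 0) i * kap j b * (\<omega> ^ (i * ga j b) * \<omega> ^ (((i + 1) mod n + (b + j) mod n) div n))"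
  have "HA_pow n \<omega> (rho_u n \<omega>) (Suc j)
      = mulv (HA_basis n) (HA_mult n \<omega>) (lin {..<n} (kap (Suc 0)) (\<lambda>i. ((n - (i + 1), i), (i + 1) mod n)))
          (lin {..<n} (kap j) (pos j))"
    by (subst HA_pow_Suc, subst Suc, subst rho_u_lin', rule refl)
  also have "\<dots> = (\<lambda>t. \<Sum>i\<in>{..<n}. \<Sum>b\<in>{..<n}. kap (Suc 0) i * kap j b *
        HA_mult n \<omega> ((n - (i + 1), i), (i + 1) mod n) (pos j b) t)"
    using n_pos by (intro mulv_lin) (auto simp: fin_hab pos_def ga_lt HA_basis_def taft_basis_def A_basis_def)
  also have "\<dots> = (\<lambda>t. \<Sum>i\<in>{..<n}. \<Sum>b\<in>{..<n}. if i + b < n then ?c i b * bvec (pos (Suc j) (i + b)) t else 0)"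
  proof (intro ext sum.cong refl)
    fix t i b assume i: "i \<in> {..<n}" and b: "b \<in> {..<n}"
    have eq: "(((n - (i + 1) + ga j b) mod n, i + b), ((i + 1) mod n + (b + j) mod n) mod n) = pos (Suc j) (i + b)"
      unfolding pos_def ga_step[OF i[simplified]] by (simp add: mod_add_eq add_ac)
    show "kap (Suc 0) i * kap j b * HA_mult n \<omega> ((n - (i + 1), i), (i + 1) mod n) (pos j b) t =
       (if i + b < n then ?c i b * bvec (pos (Suc j) (i + b)) t else 0)"
    proof -
      have l1: "(i + 1) mod n < n" and l2: "(b + j) mod n < n" using n_pos by auto
      have m: "HA_mult n \<omega> ((n - (i + 1), i), (i + 1) mod n) (pos j b) =
        (\<lambda>t. if i + b < n then \<omega> ^ (i * ga j b) * \<omega> ^ (((i + 1) mod n + (b + j) mod n) div n) * bvec (pos (Suc j) (i + b)) t else 0)"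
        by (simp only: pos_def[of j b] HA_mult_eq[OF l1 l2] eq)
      show ?thesis unfolding m by (simp add: mult.assoc)
    qed
  qed
  also have "\<dots> = lin {(i, b) \<in> {..<n} \<times> {..<n}. i + b < n} (\<lambda>(i, b). ?c i b) (\<lambda>(i, b). pos (Suc j) (i + b))"
    by (rule lin_filter) auto
  also have "\<dots> = lin {(i, b) \<in> {..<n} \<times> {..<n}. i + b < n} (\<lambda>(i, b). ?c i b) (\<lambda>x. pos (Suc j) ((\<lambda>(i, b). i + b) x))"
    by (simp add: split_def)
  also have "\<dots> = lin {..<n} (\<lambda>b'. \<Sum>x\<in>{x \<in> {(i, b) \<in> {..<n} \<times> {..<n}. i + b < n}. (\<lambda>(i, b). i + b) x = b'}. (\<lambda>(i, b). ?c i b) x) (pos (Suc j))"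
    by (rule lin_push, rule finite_subset[of _ "{..<n} \<times> {..<n}"]) auto
  also have "\<dots> = lin {..<n} (kap (Suc j)) (pos (Suc j))"
  proof (rule lin_cong[OF refl _ refl])
    fix b' assume b': "b' \<in> {..<n}"
    have set: "{x \<in> {(i, b) \<in> {..<n} \<times> {..<n}. i + b < n}. (\<lambda>(i, b). i + b) x = b'} = (\<lambda>b. (b' - b, b)) ` {..b'}"
      using b' by (auto simp: image_iff)
    have inj: "inj_on (\<lambda>b. (b' - b, b)) {..b'}" by (auto simp: inj_on_def)
    show "(\<Sum>x\<in>{x \<in> {(i, b) \<in> {..<n} \<times> {..<n}. i + b < n}. (\<lambda>(i, b). i + b) x = b'}. (\<lambda>(i, b). ?c i b) x) = kap (Suc j) b'"
      unfolding set sum.reindex[OF inj] kap_rec[of j b'] by (rule sum.cong) (simp_all only: o_def prod.case mult.assoc)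
  qed
  finally show ?case .
qed

end



lemma tens_scaled: "tens (\<lambda>t. c * bvec p t) (\<lambda>t. d * bvec q t) = (\<lambda>t. c * d * bvec (p, q) t)"
  by (auto simp: tens_def bvec_def)

lemma tens_scaled2: "tens (\<lambda>t. c * bvec p t) (bvec q) = (\<lambda>t. c * bvec (p, q) t)"
  by (auto simp: tens_def bvec_def)

context taft_setting
begin

definition Pb :: "nat \<Rightarrow> (nat \<times> nat) \<times> (nat \<times> nat) \<Rightarrow> 'k" where
  "Pb b = lin {..b} (\<lambda>k. gb k (b - k)) (\<lambda>k. ((k, b - k), (0, k)))"

definition Dx :: "(nat \<times> nat) \<times> (nat \<times> nat) \<Rightarrow> 'k" where
  "Dx = (\<lambda>t. tens taft_x taft_one t + tens (taft_g n) taft_x t)"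

lemma Dx_lin: "Dx = lin {..<2::nat} (\<lambda>_. 1) (\<lambda>c. if c = 0 then ((0, 1), (0, 0)) else ((1, 0), (0, 1)))"
proof -
  have g: "taft_g n = bvec (1, 0)" using n2 by (simp add: taft_g_def)
  show ?thesis unfolding Dx_def g taft_x_def taft_one_def tens_bvec lin_def
    by (simp add: numeral_2_eq_2)
qed

lemma HH_mult_def': "HH_mult n \<omega> (p1, p2) (q1, q2) = tens (taft_mult n \<omega> p1 q1) (taft_mult n \<omega> p2 q2)"
  by (simp add: HH_mult_def tmul_def)

lemma hm0: "k \<le> b \<Longrightarrow> Suc b < n \<Longrightarrow> HH_mult n \<omega> ((0, 1), (0, 0)) ((k, b - k), (0, k)) = (\<lambda>t. \<omega> ^ k * bvec ((k, Suc b - k), (0, k)) t)"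
proof -
  assume "k \<le> b" "Suc b < n"
  hence "Suc (b - k) < n" "Suc b - k = Suc (b - k)" "k < n" by auto
  thus ?thesis unfolding HH_mult_def' by (simp add: taft_mult_def tens_scaled2)
qed

lemma hm1: "k \<le> b \<Longrightarrow> Suc b < n \<Longrightarrow> HH_mult n \<omega> ((1, 0), (0, 1)) ((k, b - k), (0, k)) = (\<lambda>t. bvec ((Suc k, Suc b - Suc k), (0, Suc k)) t)"
proof -
  assume "k \<le> b" "Suc b < n"
  hence "b - k < n" "Suc k < n" by auto
  thus ?thesis unfolding HH_mult_def' using n2 by (simp add: taft_mult_def tens_bvec)
qed

lemma sum_shift0: "(\<Sum>k\<le>b. A k) = A 0 + (\<Sum>k\<le>b. if k < b then A (Suc k) else (0::'k))"
proof -
  have "(\<Sum>k\<le>b. A k) = (\<Sum>k<Suc b. A k)" by (simp add: lessThan_Suc_atMost)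
  also have "\<dots> = A 0 + (\<Sum>k<b. A (Suc k))" by (rule sum.lessThan_Suc_shift)
  also have "(\<Sum>k<b. A (Suc k)) = (\<Sum>k\<le>b. if k < b then A (Suc k) else 0)"
    by (simp add: sum.If_cases) (rule sum.cong, auto)
  finally show ?thesis .
qed

lemma Pb_step:
  assumes "Suc b < n"
  shows "mulv (HH_basis n) (HH_mult n \<omega>) Dx (Pb b) = Pb (Suc b)"
proof (rule ext)
  fix t :: "(nat \<times> nat) \<times> (nat \<times> nat)"
  define e :: "nat \<Rightarrow> 'k" where "e k = bvec ((k, Suc b - k), (0, k)) t" for k
  have "mulv (HH_basis n) (HH_mult n \<omega>) Dx (Pb b) t =
     (\<Sum>c<(2::nat). \<Sum>k\<le>b. 1 * gb k (b - k) * HH_mult n \<omega> (if c = 0 then ((0, 1), (0, 0)) else ((1, 0), (0, 1))) ((k, b - k), (0, k)) t)"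
    unfolding Dx_lin Pb_def using assms
    by (subst mulv_lin) (auto simp: HH_basis_def taft_basis_def)
  also have "\<dots> = (\<Sum>k\<le>b. gb k (b - k) * HH_mult n \<omega> ((0, 1), (0, 0)) ((k, b - k), (0, k)) t)
       + (\<Sum>k\<le>b. gb k (b - k) * HH_mult n \<omega> ((1, 0), (0, 1)) ((k, b - k), (0, k)) t)"
    by (simp add: numeral_2_eq_2)
  also have "(\<Sum>k\<le>b. gb k (b - k) * HH_mult n \<omega> ((0, 1), (0, 0)) ((k, b - k), (0, k)) t) = (\<Sum>k\<le>b. gb k (b - k) * \<omega> ^ k * e k)"
  proof (intro sum.cong refl)
    fix k assume k: "k \<in> {..b}"
    show "gb k (b - k) * HH_mult n \<omega> ((0, 1), (0, 0)) ((k, b - k), (0, k)) t = gb k (b - k) * \<omega> ^ k * e k"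
      using hm0[of k b] k assms by (simp add: mult.assoc e_def)
  qed
  also have "(\<Sum>k\<le>b. gb k (b - k) * HH_mult n \<omega> ((1, 0), (0, 1)) ((k, b - k), (0, k)) t) = (\<Sum>k\<le>b. gb k (b - k) * e (Suc k))"
  proof (intro sum.cong refl)
    fix k assume k: "k \<in> {..b}"
    show "gb k (b - k) * HH_mult n \<omega> ((1, 0), (0, 1)) ((k, b - k), (0, k)) t = gb k (b - k) * e (Suc k)"
      using hm1[of k b] k assms by (simp add: e_def)
  qed
  also have "(\<Sum>k\<le>b. gb k (b - k) * \<omega> ^ k * e k) = e 0 + (\<Sum>k<b. \<omega> ^ Suc k * gb (Suc k) (b - Suc k) * e (Suc k))"
  proof -
    have "(\<Sum>k\<le>b. gb k (b - k) * \<omega> ^ k * e k) = (\<Sum>k<Suc b. gb k (b - k) * \<omega> ^ k * e k)"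
      by (simp add: lessThan_Suc_atMost)
    also have "\<dots> = gb 0 (b - 0) * \<omega> ^ 0 * e 0 + (\<Sum>k<b. gb (Suc k) (b - Suc k) * \<omega> ^ Suc k * e (Suc k))"
      by (rule sum.lessThan_Suc_shift)
    finally show ?thesis by (simp add: gb_0 mult_ac)
  qed
  finally have M: "mulv (HH_basis n) (HH_mult n \<omega>) Dx (Pb b) t =
     e 0 + (\<Sum>k<b. \<omega> ^ Suc k * gb (Suc k) (b - Suc k) * e (Suc k)) + (\<Sum>k\<le>b. gb k (b - k) * e (Suc k))" .
  have "Pb (Suc b) t = (\<Sum>k\<le>Suc b. gb k (Suc b - k) * e k)" by (simp add: Pb_def lin_def e_def)
  also have "\<dots> = gb 0 (Suc b - 0) * e 0 + (\<Sum>k\<le>b. gb (Suc k) (Suc b - Suc k) * e (Suc k))"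
    by (rule sum.atMost_Suc_shift)
  also have "(\<Sum>k\<le>b. gb (Suc k) (Suc b - Suc k) * e (Suc k)) =
      (\<Sum>k\<le>b. gb k (b - k) * e (Suc k) + (if k < b then \<omega> ^ Suc k * gb (Suc k) (b - Suc k) * e (Suc k) else 0))"
  proof (intro sum.cong refl)
    fix k assume "k \<in> {..b}"
    show "gb (Suc k) (Suc b - Suc k) * e (Suc k) = gb k (b - k) * e (Suc k) + (if k < b then \<omega> ^ Suc k * gb (Suc k) (b - Suc k) * e (Suc k) else 0)"
    proof (cases "k < b")
      case True
      hence "b - k = Suc (b - Suc k)" by simp
      thus ?thesis using True by (simp add: gb_rec algebra_simps)
    next
      case False
      hence "b - k = 0" by simp
      thus ?thesis using False by (simp add: gb_0')
    qed
  qed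
  also have "\<dots> = (\<Sum>k\<le>b. gb k (b - k) * e (Suc k)) + (\<Sum>k<b. \<omega> ^ Suc k * gb (Suc k) (b - Suc k) * e (Suc k))"
  proof -
    have "(\<Sum>k\<le>b. (if k < b then \<omega> ^ Suc k * gb (Suc k) (b - Suc k) * e (Suc k) else 0)) = (\<Sum>k<b. \<omega> ^ Suc k * gb (Suc k) (b - Suc k) * e (Suc k))"
      by (simp add: sum.If_cases) (rule sum.cong, auto)
    thus ?thesis by (simp add: sum.distrib)
  qed
  finally show "mulv (HH_basis n) (HH_mult n \<omega>) Dx (Pb b) t = Pb (Suc b) t"
    using M by (simp add: gb_0)
qed

lemma HH_pow_Suc: "HH_pow n \<omega> v (Suc j) = mulv (HH_basis n) (HH_mult n \<omega>) v (HH_pow n \<omega> v j)"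
  by (simp add: HH_pow_def powv_def)

lemma HH_pow_Dx: "b < n \<Longrightarrow> HH_pow n \<omega> Dx b = Pb b"
proof (induction b)
  case 0 thus ?case
    by (simp add: HH_pow_def powv_def Pb_def lin_def taft_one_def tens_bvec gb_0)
next
  case (Suc b) thus ?case by (simp add: HH_pow_Suc Pb_step)
qed

lemma HH_pow_g: "HH_pow n \<omega> (tens (taft_g n) (taft_g n)) a = bvec ((a mod n, 0), (a mod n, 0))"
proof (induction a)
  case 0 thus ?case by (simp add: HH_pow_def powv_def taft_one_def tens_bvec)
next
  case (Suc a)
  have "HH_pow n \<omega> (tens (taft_g n) (taft_g n)) (Suc a) =
     mulv (HH_basis n) (HH_mult n \<omega>) (bvec ((1, 0), (1, 0))) (bvec ((a mod n, 0), (a mod n, 0)))"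
    using n2 by (subst HH_pow_Suc, subst Suc, simp add: taft_g_def tens_bvec)
  also have "\<dots> = HH_mult n \<omega> ((1, 0), (1, 0)) ((a mod n, 0), (a mod n, 0))"
    using n2 n_pos by (intro mulv_bvec) (auto simp: fin_hhb HH_basis_def taft_basis_def)
  also have "\<dots> = bvec ((Suc a mod n, 0), (Suc a mod n, 0))"
    unfolding HH_mult_def' using n2 by (simp add: taft_mult_def tens_scaled tens_bvec mod_Suc_eq)
  finally show ?case .
qed

lemma Delta_lin:
  assumes "a < n" "b < n"
  shows "taft_Delta n \<omega> (a, b) = lin {..b} (\<lambda>k. gb k (b - k)) (\<lambda>k. (((a + k) mod n, b - k), (a, k)))"
proof -
  have "taft_Delta n \<omega> (a, b) = mulv (HH_basis n) (HH_mult n \<omega>) (lin {()} (\<lambda>_. 1) (\<lambda>_. ((a, 0), (a, 0)))) (Pb b)"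
    unfolding taft_Delta_def using assms
    by (simp add: HH_pow_g HH_pow_Dx[unfolded Dx_def] bvec_lin[symmetric])
  also have "\<dots> = (\<lambda>t. \<Sum>k\<le>b. gb k (b - k) * HH_mult n \<omega> ((a, 0), (a, 0)) ((k, b - k), (0, k)) t)"
    unfolding Pb_def using assms by (subst mulv_lin) (auto simp: fin_hhb HH_basis_def taft_basis_def)
  also have "\<dots> = lin {..b} (\<lambda>k. gb k (b - k)) (\<lambda>k. (((a + k) mod n, b - k), (a, k)))"
    unfolding lin_def HH_mult_def' using assms by (intro ext sum.cong refl) (simp add: taft_mult_def tens_bvec less_imp_diff_less)
  finally show ?thesis .
qed

end



definition tsA :: "nat \<Rightarrow> nat \<Rightarrow> (nat \<Rightarrow> nat) set" where
  "tsA k s = {i \<in> {1..s+1} \<rightarrow>\<^sub>E {0..k}. (\<Sum>j\<in>{1..s+1}. i j) = k}"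

definition wt :: "nat \<Rightarrow> (nat \<Rightarrow> nat) \<Rightarrow> nat" where
  "wt s i = (\<Sum>j\<in>{2..s+1}. i j * (j - 1))"

lemma tuple_sum_eq: "tuple_sum \<omega> k s = (\<Sum>i\<in>tsA k s. \<omega> ^ wt s i)"
  by (simp add: tuple_sum_def tsA_def wt_def)

lemma tsA_0: "tsA k 0 = {\<lambda>j::nat. if j = 1 then k else undefined}"
proof (intro set_eqI iffI)
  fix i assume "i \<in> tsA k 0"
  hence "i \<in> {1..1} \<rightarrow>\<^sub>E {0..k}" "i 1 = k" by (auto simp: tsA_def)
  thus "i \<in> {\<lambda>j. if j = 1 then k else undefined}"
    by (auto simp: PiE_iff extensional_def)
next
  fix i :: "nat \<Rightarrow> nat" assume "i \<in> {\<lambda>j::nat. if j = 1 then k else undefined}"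
  thus "i \<in> tsA k 0" by (auto simp: tsA_def PiE_iff extensional_def)
qed

lemma tuple_sum_0: "tuple_sum \<omega> k 0 = 1"
  unfolding tuple_sum_eq tsA_0 by (simp add: wt_def)

lemma tuple_sum_Suc:
  "tuple_sum (\<omega>::'a::field) k (Suc s) = (\<Sum>t\<le>k. \<omega> ^ ((Suc s) * t) * tuple_sum \<omega> (k - t) s)"
proof -
  let ?S = "SIGMA t:{..k}. tsA (k - t) s"
  have fin: "finite (tsA m s)" for m unfolding tsA_def
    by (rule finite_subset[of _ "{1..s+1} \<rightarrow>\<^sub>E {0..m}"]) (auto intro: finite_PiE)
  have "(\<Sum>t\<le>k. \<omega> ^ ((Suc s) * t) * tuple_sum \<omega> (k - t) s)
      = (\<Sum>t\<le>k. \<Sum>i\<in>tsA (k - t) s. \<omega> ^ ((Suc s) * t + wt s i))"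
    unfolding tuple_sum_eq by (simp add: sum_distrib_left power_add)
  also have "\<dots> = (\<Sum>x\<in>?S. \<omega> ^ ((Suc s) * fst x + wt s (snd x)))"
    using fin by (subst sum.Sigma) (auto simp: split_def)
  also have "\<dots> = (\<Sum>f\<in>tsA k (Suc s). \<omega> ^ wt (Suc s) f)"
  proof (rule sum.reindex_bij_witness[where j = "\<lambda>(t, i). i(s + 2 := t)" and i = "\<lambda>f. (f (s + 2), f(s + 2 := undefined))"])
    fix a assume a: "a \<in> ?S"
    obtain t i where ti: "a = (t, i)" by (cases a)
    have "i \<in> {1..s+1} \<rightarrow>\<^sub>E {0..k - t}" "t \<le> k" "(\<Sum>j\<in>{1..s+1}. i j) = k - t"
      using a ti by (auto simp: tsA_def)
    note I = this
    have iu: "i (s + 2) = undefined" using I(1) by (auto simp: PiE_iff extensional_def)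
    show "(\<lambda>f. (f (s + 2), f(s + 2 := undefined))) ((\<lambda>(t, i). i(s + 2 := t)) a) = a"
      using ti iu by (auto intro!: ext)
    have sm: "(\<Sum>j\<in>{1..Suc s+1}. (i(s + 2 := t)) j) = k"
    proof -
      have "(\<Sum>j\<in>{1..Suc s+1}. (i(s + 2 := t)) j) = (\<Sum>j\<in>{1..s+1}. (i(s + 2 := t)) j) + t"
        by (simp add: sum.cl_ivl_Suc)
      also have "(\<Sum>j\<in>{1..s+1}. (i(s + 2 := t)) j) = (\<Sum>j\<in>{1..s+1}. i j)"
        by (intro sum.cong) auto
      finally show ?thesis using I by simp
    qed
    have "\<forall>j\<in>{1..s+1}. i j \<le> k" using I(1) by (auto simp: PiE_iff)
    thus "(\<lambda>(t, i). i(s + 2 := t)) a \<in> tsA k (Suc s)"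
      using ti I sm by (auto simp: tsA_def PiE_iff extensional_def)
    have "wt (Suc s) (i(s + 2 := t)) = wt s i + t * (Suc s)"
    proof -
      have "wt (Suc s) (i(s + 2 := t)) = (\<Sum>j\<in>{2..s+1}. (i(s + 2 := t)) j * (j - 1)) + t * (Suc s)"
        by (simp add: wt_def sum.cl_ivl_Suc)
      also have "(\<Sum>j\<in>{2..s+1}. (i(s + 2 := t)) j * (j - 1)) = wt s i"
        unfolding wt_def by (intro sum.cong) auto
      finally show ?thesis .
    qed
    thus "\<omega> ^ wt (Suc s) ((\<lambda>(t, i). i(s + 2 := t)) a) = \<omega> ^ (Suc s * fst a + wt s (snd a))"
      using ti by (simp add: algebra_simps)
  next
    fix f assume f: "f \<in> tsA k (Suc s)"
    have F: "f \<in> {1..s+2} \<rightarrow>\<^sub>E {0..k}" "(\<Sum>j\<in>{1..s+2}. f j) = k" using f by (auto simp: tsA_def)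
    show "(\<lambda>(t, i). i(s + 2 := t)) ((\<lambda>f. (f (s + 2), f(s + 2 := undefined))) f) = f" by auto
    have sp: "(\<Sum>j\<in>{1..s+2}. f j) = (\<Sum>j\<in>{1..s+1}. f j) + f (s + 2)"
      by (simp add: sum.cl_ivl_Suc)
    have sm: "(\<Sum>j\<in>{1..s+1}. (f(s + 2 := undefined)) j) = (\<Sum>j\<in>{1..s+1}. f j)"
      by (intro sum.cong) auto
    have le: "f j \<le> k - f (s + 2)" if "j \<in> {1..s+1}" for j
    proof -
      have "f j \<le> (\<Sum>j\<in>{1..s+1}. f j)" using that by (intro member_le_sum) auto
      thus ?thesis using F(2) sp by simp
    qed
    have "f (s + 2) \<le> k" using F(2) sp by simp
    moreover have "f(s + 2 := undefined) \<in> {1..s+1} \<rightarrow>\<^sub>E {0..k - f (s + 2)}"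
      using F(1) le by (auto simp: PiE_iff extensional_def)
    moreover have "(\<Sum>j\<in>{1..s+1}. (f(s + 2 := undefined)) j) = k - f (s + 2)"
      using sm sp F(2) by simp
    ultimately show "(\<lambda>f. (f (s + 2), f(s + 2 := undefined))) f \<in> ?S"
      by (auto simp: tsA_def)
  qed
  also have "\<dots> = tuple_sum \<omega> k (Suc s)" by (simp add: tuple_sum_eq)
  finally show ?thesis ..
qed

context taft_setting
begin

lemma gb_sym: "gb k s = gb s k"
  unfolding gb_def by (simp add: gpoly_sym[of k s])

lemma gb_sum: "gb k (Suc s) = (\<Sum>t\<le>k. \<omega> ^ ((Suc s) * t) * gb (k - t) s)"
proof (induction k)
  case 0 thus ?case by (simp add: gb_0)
next
  case (Suc k)
  have "gb (Suc k) (Suc s) = gb (Suc k) s + \<omega> ^ Suc s * gb k (Suc s)"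
    by (metis gb_sym gb_rec)
  also have "\<dots> = gb (Suc k) s + (\<Sum>t\<le>k. \<omega> ^ ((Suc s) * Suc t) * gb (k - t) s)"
    by (simp add: Suc sum_distrib_left power_add mult.assoc)
  also have "\<dots> = (\<Sum>t\<le>Suc k. \<omega> ^ ((Suc s) * t) * gb (Suc k - t) s)"
    by (subst sum.atMost_Suc_shift) simp
  finally show ?case .
qed

lemma tuple_sum_gb: "tuple_sum \<omega> k s = gb k s"
proof (induction s arbitrary: k)
  case 0 thus ?case by (simp add: tuple_sum_0 gb_0')
next
  case (Suc s) thus ?case by (simp add: tuple_sum_Suc gb_sum)
qed

end



lemma tens_bvec_lin:
  assumes "finite I"
  shows "tens (bvec p) (lin I \<alpha> q) = lin I \<alpha> (\<lambda>i. (p, q i))"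
proof (rule ext)
  fix x show "tens (bvec p) (lin I \<alpha> q) x = lin I \<alpha> (\<lambda>i. (p, q i)) x"
    by (cases x) (auto simp: tens_def lin_def bvec_def sum_distrib_left intro!: sum.cong)
qed

lemma lin_sumD:
  assumes "finite A" "\<And>j. j \<in> A \<Longrightarrow> finite (I j)"
  shows "(\<lambda>t. \<Sum>j\<in>A. v j * lin (I j) (\<alpha> j) (p j) t) = lin (SIGMA j:A. I j) (\<lambda>(j,i). v j * \<alpha> j i) (\<lambda>(j,i). p j i)"
  unfolding lin_def using assms
  by (intro ext) (simp add: sum.Sigma sum_distrib_left mult.assoc split_def)

lemma linext_sum:
  "linext B f (\<lambda>t. \<Sum>j\<in>J. v j * w j t) = (\<lambda>t. \<Sum>j\<in>J. v j * linext B f (w j) t)"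
  unfolding linext_def
  by (intro ext) (simp add: sum_distrib_left sum_distrib_right mult_ac sum.swap[of _ B])

context taft_setting
begin

lemma rho_bvec: "l < n \<Longrightarrow> rho n \<omega> (bvec l) = lin {..<n} (kap l) (pos l)"
  unfolding rho_def by (subst bvec_lin, subst linext_lin) (auto simp: fin_ab A_basis_def rho_pow)

lemma id_rho_pow: "id_rho n \<omega> (lin {..<n} (kap j) (pos j)) =
   lin ({..<n} \<times> {..<n}) (\<lambda>(b1, b2). kap j b1 * kap ((b1 + j) mod n) b2)
     (\<lambda>(b1, b2). ((ga j b1, b1), pos ((b1 + j) mod n) b2))"
proof -
  have "id_rho n \<omega> (lin {..<n} (kap j) (pos j)) = (\<lambda>t. \<Sum>b\<in>{..<n}. kap j b *
      lin {..<n} (kap ((b + j) mod n)) (\<lambda>b2. ((ga j b, b), pos ((b + j) mod n) b2)) t)"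
    unfolding id_rho_def using n_pos
    by (subst linext_lin) (auto simp: fin_hab pos_def ga_lt HA_basis_def taft_basis_def A_basis_def rho_bvec tens_bvec_lin)
  also have "\<dots> = lin ({..<n} \<times> {..<n}) (\<lambda>(b1, b2). kap j b1 * kap ((b1 + j) mod n) b2)
     (\<lambda>(b1, b2). ((ga j b1, b1), pos ((b1 + j) mod n) b2))"
    by (rule lin_sum) auto
  finally show ?thesis .
qed

lemma G_lin:
  fixes l :: nat
  assumes "a < n" "b < n"
  shows "(\<lambda>(h1, (h2, l')). tens (taft_Delta n \<omega> (a, b)) (bvec l) ((h1, h2), l')) =
     lin {..b} (\<lambda>k. gb k (b - k)) (\<lambda>k. (((a + k) mod n, b - k), ((a, k), l)))"
proof (rule ext)
  fix x :: "(nat \<times> nat) \<times> ((nat \<times> nat) \<times> nat)"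
  obtain h1 h2 l' where x: "x = (h1, (h2, l'))" by (cases x) auto
  show "(\<lambda>(h1, (h2, l')). tens (taft_Delta n \<omega> (a, b)) (bvec l) ((h1, h2), l')) x =
     lin {..b} (\<lambda>k. gb k (b - k)) (\<lambda>k. (((a + k) mod n, b - k), ((a, k), l))) x"
    unfolding x Delta_lin[OF assms]
    by (auto simp: tens_def lin_def bvec_def sum_distrib_right intro!: sum.cong)
qed

lemma Delta_id_pow: "Delta_id n \<omega> (lin {..<n} (kap j) (pos j)) =
   lin (SIGMA b:{..<n}. {..b}) (\<lambda>(b, k). kap j b * gb k (b - k))
     (\<lambda>(b, k). (((ga j b + k) mod n, b - k), ((ga j b, k), (b + j) mod n)))"
proof -
  have "Delta_id n \<omega> (lin {..<n} (kap j) (pos j)) = (\<lambda>t. \<Sum>b\<in>{..<n}. kap j b *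
      lin {..b} (\<lambda>k. gb k (b - k)) (\<lambda>k. (((ga j b + k) mod n, b - k), ((ga j b, k), (b + j) mod n))) t)"
    unfolding Delta_id_def using n_pos
    by (subst linext_lin) (auto simp: fin_hab pos_def ga_lt HA_basis_def taft_basis_def A_basis_def G_lin)
  also have "\<dots> = lin (SIGMA b:{..<n}. {..b}) (\<lambda>(b, k). kap j b * gb k (b - k))
     (\<lambda>(b, k). (((ga j b + k) mod n, b - k), ((ga j b, k), (b + j) mod n)))"
    by (rule lin_sumD) auto
  finally show ?thesis .
qed

lemma ga_l: "ga ((b1 + j) mod n) b2 = ga j (b1 + b2)"
  unfolding ga_def by (simp add: mod_add_right_eq add_ac)

lemma ga_shift: "ga j b1 = (ga j (b1 + b2) + b2) mod n"
proof (rule ga_char)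
  show "(ga j (b1 + b2) + b2) mod n < n" using n_pos by simp
  define X where "X = ga j (b1 + b2) + b2"
  obtain q where q: "int (ga j (b1 + b2)) = int n * q - int (b1 + b2 + j)" using ga_int by blast
  have e: "int X = int n * int (X div n) + int (X mod n)"
    by (simp only: of_nat_mult[symmetric] of_nat_add[symmetric] mult_div_mod_eq)
  have "int (X mod n) + int (b1 + j) = int n * (q - int (X div n))"
    using e q by (simp add: X_def algebra_simps)
  thus "int n dvd (int ((ga j (b1 + b2) + b2) mod n) + int (b1 + j))"
    unfolding X_def by (rule dvdI)
qed

lemma main_eq:
  assumes "j < n"
  shows "id_rho n \<omega> (HA_pow n \<omega> (rho_u n \<omega>) j) = Delta_id n \<omega> (HA_pow n \<omega> (rho_u n \<omega>) j)"
proof -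
  let ?Q = "{(b1, b2). b1 < n \<and> b2 < n \<and> b1 + b2 < n}"
  let ?h = "\<lambda>(b1, b2). (b1 + b2, b2)"
  have "id_rho n \<omega> (HA_pow n \<omega> (rho_u n \<omega>) j) =
     lin ({..<n} \<times> {..<n}) (\<lambda>(b1, b2). kap j b1 * kap ((b1 + j) mod n) b2)
     (\<lambda>(b1, b2). ((ga j b1, b1), pos ((b1 + j) mod n) b2))"
    by (simp add: rho_pow id_rho_pow)
  also have "\<dots> = lin ?Q (\<lambda>(b1, b2). kap j b1 * kap ((b1 + j) mod n) b2)
     (\<lambda>(b1, b2). ((ga j b1, b1), pos ((b1 + j) mod n) b2))"
  proof (rule lin_mono_neutral[symmetric])
    show "finite ({..<n} \<times> {..<n})" by simp
    show "?Q \<subseteq> {..<n} \<times> {..<n}" by (clarsimp simp: subset_iff)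
    fix x assume "x \<in> {..<n} \<times> {..<n} - ?Q"
    then obtain b1 b2 where x: "x = (b1, b2)" "b1 < n" "b2 < n" "\<not> b1 + b2 < n" by auto
    show "(\<lambda>(b1, b2). kap j b1 * kap ((b1 + j) mod n) b2) x = 0"
      using x assms kap_prod[of j b1 b2] by simp
  qed
  also have "\<dots> = lin ?Q (\<lambda>x. (\<lambda>(b, k). kap j b * gb k (b - k)) (?h x))
     (\<lambda>x. (\<lambda>(b, k). (((ga j b + k) mod n, b - k), ((ga j b, k), (b + j) mod n))) (?h x))"
  proof (rule lin_cong[OF refl])
    fix x assume "x \<in> ?Q"
    then obtain b1 b2 where x: "x = (b1, b2)" "b1 < n" "b2 < n" "b1 + b2 < n" by auto
    show "(\<lambda>(b1, b2). kap j b1 * kap ((b1 + j) mod n) b2) x = (\<lambda>x. (\<lambda>(b, k). kap j b * gb k (b - k)) (?h x)) x"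
      using x assms by (simp add: kap_prod)
    show "(\<lambda>(b1, b2). ((ga j b1, b1), pos ((b1 + j) mod n) b2)) x =
      (\<lambda>x. (\<lambda>(b, k). (((ga j b + k) mod n, b - k), ((ga j b, k), (b + j) mod n))) (?h x)) x"
      using x by (simp add: pos_def ga_l ga_shift[of j b1 b2] mod_add_right_eq add_ac)
  qed
  also have "\<dots> = lin (?h ` ?Q) (\<lambda>(b, k). kap j b * gb k (b - k))
     (\<lambda>(b, k). (((ga j b + k) mod n, b - k), ((ga j b, k), (b + j) mod n)))"
    by (rule lin_reindex[symmetric]) (auto simp: inj_on_def)
  also have "?h ` ?Q = (SIGMA b:{..<n}. {..b})"
  proof (intro set_eqI iffI)
    fix y assume "y \<in> (SIGMA b:{..<n}. {..b})"
    then obtain b k where y: "y = (b, k)" "b < n" "k \<le> b" by auto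
    hence m: "(b - k, k) \<in> ?Q" and e: "?h (b - k, k) = y" by auto
    show "y \<in> ?h ` ?Q" using image_eqI[of y ?h "(b - k, k)" ?Q, OF e[symmetric] m] .
  next
    fix y assume "y \<in> ?h ` ?Q"
    then obtain x where x: "x \<in> ?Q" "y = ?h x" by (rule imageE)
    obtain b1 b2 where "x = (b1, b2)" by (cases x)
    with x show "y \<in> (SIGMA b:{..<n}. {..b})" by simp
  qed
  also have "lin (SIGMA b:{..<n}. {..b}) (\<lambda>(b, k). kap j b * gb k (b - k))
     (\<lambda>(b, k). (((ga j b + k) mod n, b - k), ((ga j b, k), (b + j) mod n))) =
     Delta_id n \<omega> (HA_pow n \<omega> (rho_u n \<omega>) j)"
    by (simp add: rho_pow Delta_id_pow)
  finally show ?thesis .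
qed

lemma comod: "is_comodule_algebra n \<omega>"
proof -
  have "id_rho n \<omega> (rho n \<omega> v) = Delta_id n \<omega> (rho n \<omega> v)" for v
  proof -
    have r: "rho n \<omega> v = (\<lambda>t. \<Sum>j\<in>A_basis n. v j * HA_pow n \<omega> (rho_u n \<omega>) j t)"
      by (simp add: rho_def linext_def)
    show ?thesis unfolding r id_rho_def Delta_id_def linext_sum
      unfolding id_rho_def[symmetric] Delta_id_def[symmetric]
      by (intro ext sum.cong refl) (simp add: A_basis_def main_eq)
  qed
  thus ?thesis unfolding is_comodule_algebra_def by simp
qed

lemma gb_vanish: "k < n \<Longrightarrow> s < n \<Longrightarrow> n \<le> k + s \<Longrightarrow> gb k s = 0"
proof -
  assume k: "k < n" and s: "s < n" and ks: "n \<le> k + s"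
  have "n - s \<in> {1..k}" using k s ks by auto
  moreover have "1 - \<omega> ^ (s + (n - s)) = 0" using s w_n by simp
  ultimately have "\<exists>a\<in>{1..k}. 1 - \<omega> ^ (s + a) = 0" by blast
  hence "ff k s = 0" unfolding ff_def by (intro prod_zero) auto
  hence "gb k s * dd k = 0" by (simp add: gb_dd)
  thus ?thesis using dd_ne0[OF k] by simp
qed

lemma rhs: "\<forall>k s. k \<le> n - 1 \<and> s \<le> n - 1 \<longrightarrow>
       tuple_sum \<omega> k s = (if k + s < n then poly (qbinom_poly k s) \<omega> else 0)"
proof (intro allI impI)
  fix k s assume a: "k \<le> n - 1 \<and> s \<le> n - 1"
  hence "k < n" "s < n" using n_pos by auto
  thus "tuple_sum \<omega> k s = (if k + s < n then poly (qbinom_poly k s) \<omega> else 0)"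
    by (auto simp: tuple_sum_gb qbinom_poly_gpoly gb_def[symmetric] gb_vanish)
qed

end

theorem theorem3p9:
  fixes \<omega> :: "'k::field_char_0" and n :: nat
  assumes "2 \<le> n" and "primitive_root n \<omega>"
  shows "is_comodule_algebra n \<omega> \<longleftrightarrow>
    (\<forall>k s. k \<le> n - 1 \<and> s \<le> n - 1 \<longrightarrow>
       tuple_sum \<omega> k s = (if k + s < n then poly (qbinom_poly k s) \<omega> else 0))"
proof -
  interpret taft_setting n \<omega> using assms by unfold_locales
  show ?thesis using comod rhs by blast
qed



end
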